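(* Let $N>1$ and $d>0$ be real numbers with $$d^{2}>\frac{16N^{2}}{27}\left(\left(8N^{2}-6\right)\sqrt{1-\frac{3N^{-2}}{4}}+8N^{2}-9\right).$$ Let $F(z)=(1-Nz)^{2}\left(1-\frac{d^{2}}{z^{2}-1}\right)$, $\varphi(z)=\frac{1}{d^{2}}+\frac{1-N^{-1}z}{(z^{2}-1)^{2}}$ and $I_{2}=(1,\sqrt{1+d^{2}})$. Then the equation $\varphi(z)=0$ has exactly two roots $z_{02}<z_{03}$ in $I_{2}$. Moreover, for real $A>0$, the equation $F(z)+A=0$ (i.e. the quartic equation $(1-Nz)^{2}(z^{2}-1-d^{2})+A(z^{2}-1)=0$ in the complex variable $z$) has four real roots when $-F(z_{02})<A\leq -F(z_{03})$, and has two real and two (non-real) complex roots when $A<-F(z_{02})$ and when $A>-F(z_{03})$.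
   Context: This is the (dimensionless) dispersion relation for Kelvin–Helmholtz perturbations of two thin co-flowing layers (a pure incompressible fluid and a bubbly fluid): $z=ad/(u_{20}-c)$ with $c$ the phase velocity, $d=1/(bk)$, $N=M/d$ with $M=(u_{20}-u_{10})/a$, and $A=h_0\rho_{20}/((H_0-h_0)\rho_{10})>0$. The equation $F(z)+A=0$ is regarded as the fourth-degree polynomial equation obtained by multiplying by $z^{2}-1$; roots are counted with multiplicity. *)

theory Defs
  imports "HOL-Computational_Algebra.Polynomial" Complex_Main
begin

definition KH_F :: "real \<Rightarrow> real \<Rightarrow> real \<Rightarrow> real" where
  "KH_F N d z = (1 - N * z)^2 * (1 - d^2 / (z^2 - 1))"

definition KH_phi :: "real \<Rightarrow> real \<Rightarrow> real \<Rightarrow> real" where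
  "KH_phi N d z = 1 / d^2 + (1 - z / N) / (z^2 - 1)^2"

text \<open>The quartic (1 - N z)^2 (z^2 - 1 - d^2) + A (z^2 - 1), i.e. (F(z)+A)(z^2-1).\<close>
definition KH_quartic :: "real \<Rightarrow> real \<Rightarrow> real \<Rightarrow> real poly" where
  "KH_quartic N d A = [:1, -N:]^2 * [:-(1 + d^2), 0, 1:] + smult A [:-1, 0, 1:]"

definition real_root_count :: "real poly \<Rightarrow> nat" where
  "real_root_count p = (\<Sum>x\<in>{x. poly p x = 0}. order x p)"

definition nonreal_root_count :: "real poly \<Rightarrow> nat" where
  "nonreal_root_count p =
     (\<Sum>z\<in>{z. poly (map_poly complex_of_real p) z = 0 \<and> Im z \<noteq> 0}.
        order z (map_poly complex_of_real p))"

end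

theory Submission
  imports Defs "HOL-Computational_Algebra.Fundamental_Theorem_Algebra"
begin


definition gg :: "real \<Rightarrow> real \<Rightarrow> real \<Rightarrow> real" where
  "gg N d x = (x^2-1)^2 + d^2*(1 - x/N)"

lemma three_zeros:
  assumes "1 < a" "a < b" "b < c" "gg N d a = 0" "gg N d b = 0" "gg N d c = 0"
  shows False
proof -
  define P where "P u v = (u+v)*(u^2+v^2) - 2*(u+v) - d^2/N" for u v
  have fac: "gg N d u - gg N d v = (u - v) * P u v" for u v
    unfolding gg_def P_def by (simp add: algebra_simps power2_eq_square diff_divide_distrib[symmetric] add_divide_distrib[symmetric])
  have "P a b = 0" using fac[of a b] assms by simp
  moreover have "P b c = 0" using fac[of b c] assms by simp
  moreover have "P a b - P b c = (a - c) * (a^2+b^2+c^2+a*b+b*c+c*a - 2)"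
    unfolding P_def by (simp add: algebra_simps power2_eq_square power3_eq_cube)
  moreover have "a^2+b^2+c^2+a*b+b*c+c*a - 2 > 0"
  proof -
    have "a^2 > 1" "b^2>1" "a*b > 1" using assms by (auto simp: power2_eq_square less_1_mult)
    moreover have "c^2 \<ge> 0" "b*c > 0" "c*a > 0" using assms by auto
    ultimately show ?thesis by linarith
  qed
  ultimately show False using assms by simp
qed

lemma zstar:
  fixes N d :: real
  assumes N1: "N > 1" and d0: "d > 0"
    and hyp: "d^2 > 16 * N^2 / 27 * ((8 * N^2 - 6) * sqrt (1 - 3 / (4 * N^2)) + 8 * N^2 - 9)"
  defines "zs \<equiv> (2*N + sqrt (4*N^2-3))/3"
  shows "zs > N" "gg N d zs < 0"
proof -
  define r where "r = sqrt (4*N^2-3)"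
  have NN: "N*N > 1" using N1 less_1_mult by fastforce
  have nn: "4*N^2-3 \<ge> 0" using NN by (simp add: power2_eq_square)
  have r2: "r^2 = 4*N^2-3" unfolding r_def using nn by (simp add: power2_eq_square)
  have r0: "r \<ge> 0" unfolding r_def using nn by simp
  have "N^2 < r^2" using r2 NN by (simp add: power2_eq_square)
  hence rN: "r > N" using r0 N1 by (smt (verit) power_mono)
  show zN: "zs > N" unfolding zs_def r_def[symmetric] using rN by simp
  have "sqrt (1 - 3 / (4 * N^2)) = sqrt ((4*N^2-3)/(2*N)^2)"
    using N1 by (simp add: field_simps power2_eq_square)
  also have "\<dots> = r/(2*N)" unfolding r_def real_sqrt_divide using N1 by (simp only: real_sqrt_abs)
  finally have sq: "sqrt (1 - 3 / (4 * N^2)) = r/(2*N)" .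
  have hyp2: "d^2 > 16*N/27*((4*N^2-3)*r + 8*N^3-9*N)"
  proof -
    have "16 * N^2 / 27 * ((8 * N^2 - 6) * (r/(2*N)) + 8 * N^2 - 9) = 16*N/27*((4*N^2-3)*r + 8*N^3-9*N)"
      using N1 by (simp add: field_simps power2_eq_square power3_eq_cube)
    thus ?thesis using hyp unfolding sq by simp
  qed
  have zs1: "zs^2-1 = 4*(2*N^2+N*r-3)/9"
    unfolding zs_def r_def[symmetric] using r2 by (simp add: field_simps power2_eq_square)
  have sqid: "(2*N^2+N*r-3)^2 = ((4*N^2-3)*r+8*N^3-9*N)*(r-N) + (3-3*N^2)*(r^2-(4*N^2-3))"
    by (simp add: field_simps power2_eq_square power3_eq_cube)
  have ident: "N*(zs^2-1)^2 = 16*N/81*((4*N^2-3)*r+8*N^3-9*N)*(r-N)"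
  proof -
    define w where "w = 2*N^2+N*r-3"
    have "N*(zs^2-1)^2 = N*(4*w/9)^2" unfolding zs1 w_def by simp
    also have "\<dots> = 16*N/81*w^2" by (simp add: power2_eq_square)
    finally have "N*(zs^2-1)^2 = 16*N/81*(2*N^2+N*r-3)^2" unfolding w_def .
    also have "\<dots> = 16*N/81*(((4*N^2-3)*r+8*N^3-9*N)*(r-N))" unfolding sqid r2 by simp
    finally show ?thesis by simp
  qed
  hence ident2: "N*(zs^2-1)^2 = 16*N/27*((4*N^2-3)*r+8*N^3-9*N)*(zs-N)"
  proof -
    have zsN: "zs - N = (r-N)/3" unfolding zs_def r_def by simp
    show ?thesis unfolding ident zsN by simp
  qed
  have "N*(zs^2-1)^2 < d^2*(zs-N)"
    unfolding ident2 using hyp2 zN by (intro mult_strict_right_mono) auto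
  thus "gg N d zs < 0" unfolding gg_def using N1 by (simp add: field_simps)
qed


lemma ivt0:
  fixes f :: "real \<Rightarrow> real"
  assumes "continuous_on {a..b} f" "a < b" "f a * f b < 0"
  shows "\<exists>x. a < x \<and> x < b \<and> f x = 0"
proof (cases "f a < 0")
  case True
  hence "f b > 0" using assms(3) by (simp add: mult_less_0_iff)
  then obtain x where "a \<le> x" "x \<le> b" "f x = 0" using IVT'[of f a 0 b] True assms by auto
  thus ?thesis using True \<open>f b > 0\<close> by (intro exI[of _ x]) (auto simp: order.order_iff_strict)
next
  case False
  hence "f a > 0" "f b < 0" using assms(3) by (auto simp: mult_less_0_iff)
  then obtain x where "a \<le> x" "x \<le> b" "f x = 0" using IVT2'[of f b 0 a] assms by auto
  thus ?thesis using \<open>f a > 0\<close> \<open>f b < 0\<close> by (intro exI[of _ x]) (auto simp: order.order_iff_strict)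
qed

lemma gg_cont: "N \<noteq> 0 \<Longrightarrow> continuous_on S (gg N d)"
  unfolding gg_def by (intro continuous_intros) auto

lemma gg_pos_big:
  assumes "N > 1" "d > 0" "x \<ge> sqrt (1 + d^2)"
  shows "gg N d x > 0"
proof -
  have "sqrt (1+d^2) ^2 \<le> x^2" using assms(3) by (intro power_mono) auto
  hence "x^2 \<ge> 1 + d^2" by simp
  hence x1: "x^2 - 1 \<ge> d^2" by simp
  have dp: "d^2 > 0" using assms by simp
  have "x > 1"
  proof -
    have "sqrt 1 < sqrt (1+d^2)" using dp by (subst real_sqrt_less_iff) simp
    thus ?thesis using assms(3) by (simp only: real_sqrt_one)
  qed
  have "(x^2-1)^2 \<ge> d^2*(x^2-1)" using x1 dp by (simp add: power2_eq_square mult_right_mono)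
  moreover have "x/N < x" using assms \<open>x>1\<close> by (simp add: divide_less_eq)
  moreover have "x < x^2" using \<open>x>1\<close> by (simp add: power2_eq_square)
  ultimately have "(x^2-1)^2 + d^2*(1 - x/N) \<ge> d^2*(x^2 - x/N)"
    by (simp add: algebra_simps)
  moreover have "d^2*(x^2 - x/N) > 0" using dp \<open>x/N < x\<close> \<open>x < x^2\<close> by simp
  ultimately show ?thesis unfolding gg_def by linarith
qed

lemma gg_props:
  assumes N1: "N > 1" and d0: "d > 0" and zs1: "zs > 1" and gzs: "gg N d zs < 0"
  obtains z02 z03 where "1 < z02" "z02 < zs" "zs < z03" "z03 < sqrt (1+d^2)"
    "gg N d z02 = 0" "gg N d z03 = 0"
    "\<And>x. 1 < x \<Longrightarrow> gg N d x = 0 \<Longrightarrow> x = z02 \<or> x = z03"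
    "\<And>x. 1 < x \<Longrightarrow> x < z02 \<Longrightarrow> gg N d x > 0"
    "\<And>x. z02 < x \<Longrightarrow> x < z03 \<Longrightarrow> gg N d x < 0"
    "\<And>x. z03 < x \<Longrightarrow> gg N d x > 0"
proof -
  define s where "s = sqrt (1+d^2)"
  have cont: "continuous_on S (gg N d)" for S using gg_cont N1 by simp
  have g1: "gg N d 1 > 0" unfolding gg_def using N1 d0 by simp
  have gs: "x \<ge> s \<Longrightarrow> gg N d x > 0" for x using gg_pos_big N1 d0 unfolding s_def by blast
  have zss: "zs < s" using gs[of zs] gzs by linarith
  obtain z02 where z02: "1 < z02" "z02 < zs" "gg N d z02 = 0"
    using ivt0[OF cont zs1] g1 gzs by (auto simp: mult_pos_neg)
  obtain z03 where z03: "zs < z03" "z03 < s" "gg N d z03 = 0"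
    using ivt0[OF cont zss] gs[of s] gzs by (auto simp: mult_neg_pos)
  have uniq: "x = z02 \<or> x = z03" if "1 < x" "gg N d x = 0" for x
  proof (rule ccontr)
    assume ne: "\<not> (x = z02 \<or> x = z03)"
    have "x < z02 \<or> (z02 < x \<and> x < z03) \<or> z03 < x" using ne z02 z03 by linarith
    thus False
    proof (elim disjE conjE)
      assume "x < z02" thus False using three_zeros[of x z02 z03 N d] that z02 z03 by linarith
    next
      assume "z02 < x" "x < z03" thus False using three_zeros[of z02 x z03 N d] that z02 z03 by linarith
    next
      assume "z03 < x" thus False using three_zeros[of z02 z03 x N d] that z02 z03 by linarith
    qed
  qed
  have s1: "gg N d x > 0" if x1: "1 < x" "x < z02" for x
  proof (rule ccontr)
    assume "\<not> gg N d x > 0"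
    moreover have "gg N d x \<noteq> 0" using uniq[of x] that z02 z03 by auto
    ultimately have "gg N d x < 0" by simp
    then obtain y where "1 < y" "y < x" "gg N d y = 0"
      using ivt0[OF cont x1(1)] g1 by (auto simp: mult_pos_neg)
    thus False using uniq[of y] that z02 z03 by auto
  qed
  have s2: "gg N d x < 0" if "z02 < x" "x < z03" for x
  proof (rule ccontr)
    assume "\<not> gg N d x < 0"
    moreover have "gg N d x \<noteq> 0" using uniq[of x] that z02 z03 by auto
    ultimately have gx: "gg N d x > 0" by simp
    have "x \<noteq> zs" using gx gzs by auto
    then have "\<exists>y. z02 < y \<and> y < z03 \<and> gg N d y = 0"
    proof (cases "x < zs")
      case True
      then obtain y where "x < y" "y < zs" "gg N d y = 0"
        using ivt0[OF cont True] gx gzs by (auto simp: mult_pos_neg)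
      thus ?thesis using that z03 by (intro exI[of _ y]) auto
    next
      case False
      hence "zs < x" using \<open>x \<noteq> zs\<close> by simp
      then obtain y where "zs < y" "y < x" "gg N d y = 0"
        using ivt0[OF cont \<open>zs < x\<close>] gx gzs by (auto simp: mult_neg_pos)
      thus ?thesis using that z02 by (intro exI[of _ y]) auto
    qed
    then obtain y where "z02 < y" "y < z03" "gg N d y = 0" by blast
    thus False using uniq[of y] z02 by auto
  qed
  have s3: "gg N d x > 0" if "z03 < x" for x
  proof (rule ccontr)
    assume "\<not> gg N d x > 0"
    moreover have "gg N d x \<noteq> 0" using uniq[of x] that z02 z03 by auto
    ultimately have gx: "gg N d x < 0" by simp
    hence "x < s" using gs[of x] by linarith
    then obtain y where "x < y" "y < s" "gg N d y = 0"
      using ivt0[OF cont \<open>x < s\<close>] gx gs[of s] by (auto simp: mult_neg_pos)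
    thus False using uniq[of y] that z02 z03 by auto
  qed
  show ?thesis using that[OF z02(1,2) z03(1) z03(2)[unfolded s_def] z02(3) z03(3) uniq s1 s2 s3] .
qed


lemma F_deriv:
  assumes "N \<noteq> 0" "x^2 \<noteq> 1"
  shows "(KH_F N d has_real_derivative (-2*N*(1-N*x)*gg N d x/(x^2-1)^2)) (at x)"
proof -
  define u where "u = x^2 - 1"
  have u0: "u \<noteq> 0" using assms u_def by simp
  have key: "- (- (d^2 * (2 * x) / (v * v))) * (1 - N * x)^2 - 2 * (N * (1 - N * x)) * (1 - d^2 / v) = (1 - N * x)^2 * (d^2 * (2 * x)) / v^2 - (2 - 2 * (N * x)) * N * (1 - d^2 / v)" for v
    by (cases "v = 0") (simp_all add: power2_eq_square field_simps)
  have D: "(KH_F N d has_real_derivative (2*(1-N*x)*(-N)*(1 - d^2/(x^2-1)) + (1-N*x)^2*(d^2*(2*x)/(x^2-1)^2))) (at x)"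
    unfolding KH_F_def
    apply (rule derivative_eq_intros refl)+
    using u0 u_def apply simp_all
    by (rule key)
  have "2*(1-N*x)*(-N)*(1 - d^2/u) + (1-N*x)^2*(d^2*(2*x)/u^2) = -2*N*(1-N*x)*((u^2 + d^2*(1-x/N))/u^2)"
  proof -
    have z: "N*u + x*(1-N*x) + N - x = 0" unfolding u_def by (simp add: algebra_simps power2_eq_square)
    have "2*(1-N*x)*(-N)*(1 - d^2/u) + (1-N*x)^2*(d^2*(2*x)/u^2) - (-2*N*(1-N*x)*((u^2 + d^2*(1-x/N))/u^2)) = 2*(1-N*x)*d^2/u^2 * (N*u + x*(1-N*x) + N - x)"
      using u0 assms(1) by (simp add: field_simps power2_eq_square)
    thus ?thesis unfolding z by simp
  qed
  thus ?thesis using D unfolding gg_def u_def by simp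
qed

lemma F_cont:
  assumes "N \<noteq> 0" "\<forall>t\<in>{x..y}. t^2 \<noteq> 1"
  shows "continuous_on {x..y} (KH_F N d)"
  using assms F_deriv by (intro continuous_at_imp_continuous_on ballI DERIV_isCont) blast

lemma F_incr:
  assumes N: "N > 0" and xy: "x < y" and ne: "\<forall>t\<in>{x..y}. t^2 \<noteq> 1"
    and sg: "\<And>t. x < t \<Longrightarrow> t < y \<Longrightarrow> (1 - N*t) * gg N d t < 0"
  shows "KH_F N d x < KH_F N d y"
proof (rule DERIV_pos_imp_increasing_open[OF xy])
  show "continuous_on {x..y} (KH_F N d)" using F_cont ne N by simp
  fix t assume t: "x < t" "t < y"
  have "t^2 \<noteq> 1" using ne t by auto
  hence "(t^2-1)^2 > 0" by simp
  moreover have "-2*N*((1-N*t)*gg N d t) > 0" using sg[OF t] N by (simp add: mult_pos_neg)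
  ultimately have "-2*N*((1-N*t)*gg N d t)/(t^2-1)^2 > 0" by (metis divide_pos_pos)
  thus "\<exists>y. DERIV (KH_F N d) t :> y \<and> y > 0"
    using F_deriv[of N t d] N \<open>t^2 \<noteq> 1\<close> by (intro exI[of _ "-2*N*(1-N*t)*gg N d t/(t^2-1)^2"] conjI) (auto simp: mult.assoc)
qed

lemma F_decr:
  assumes N: "N > 0" and xy: "x < y" and ne: "\<forall>t\<in>{x..y}. t^2 \<noteq> 1"
    and sg: "\<And>t. x < t \<Longrightarrow> t < y \<Longrightarrow> (1 - N*t) * gg N d t > 0"
  shows "KH_F N d x > KH_F N d y"
proof (rule DERIV_neg_imp_decreasing_open[OF xy])
  show "continuous_on {x..y} (KH_F N d)" using F_cont ne N by simp
  fix t assume t: "x < t" "t < y"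
  have "t^2 \<noteq> 1" using ne t by auto
  hence "(t^2-1)^2 > 0" by simp
  moreover have "-2*N*((1-N*t)*gg N d t) < 0" using sg[OF t] N by (simp add: mult_pos_pos)
  ultimately have "-2*N*((1-N*t)*gg N d t)/(t^2-1)^2 < 0" by (simp add: divide_neg_pos)
  thus "\<exists>y. DERIV (KH_F N d) t :> y \<and> y < 0"
    using F_deriv[of N t d] N \<open>t^2 \<noteq> 1\<close> by (intro exI[of _ "-2*N*(1-N*t)*gg N d t/(t^2-1)^2"] conjI) (auto simp: mult.assoc)
qed

definition qq :: "real \<Rightarrow> real \<Rightarrow> real \<Rightarrow> real \<Rightarrow> real" where
  "qq N d A x = (1-N*x)^2*(x^2-1-d^2) + A*(x^2-1)"

definition qd :: "real \<Rightarrow> real \<Rightarrow> real \<Rightarrow> real \<Rightarrow> real" where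
  "qd N d A x = -2*N*(1-N*x)*(x^2-1-d^2) + 2*x*(1-N*x)^2 + 2*A*x"

lemma Q_eq: "KH_quartic N d A = [:-(1+d^2)-A, 2*N*(1+d^2), 1 - N^2*(1+d^2) + A, -2*N, N^2:]"
  apply (subst poly_eq_poly_eq_iff[symmetric])
  apply (rule ext)
  by (simp add: KH_quartic_def algebra_simps power2_eq_square power3_eq_cube power4_eq_xxxx)

lemma poly_Q: "poly (KH_quartic N d A) x = qq N d A x"
  unfolding Q_eq qq_def by (simp add: algebra_simps power2_eq_square power3_eq_cube power4_eq_xxxx)

lemma poly_dQ: "poly (pderiv (KH_quartic N d A)) x = qd N d A x"
  unfolding Q_eq qd_def by (simp add: pderiv_pCons algebra_simps power2_eq_square power3_eq_cube)

lemma Q_ne: "N \<noteq> 0 \<Longrightarrow> KH_quartic N d A \<noteq> 0"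
  unfolding Q_eq by simp

lemma dQ_ne: "N \<noteq> 0 \<Longrightarrow> pderiv (KH_quartic N d A) \<noteq> 0"
  unfolding Q_eq by (simp add: pderiv_pCons)

lemma degree_Q: "N \<noteq> 0 \<Longrightarrow> degree (KH_quartic N d A) = 4"
  unfolding Q_eq by simp

lemma qq_F: "x^2 \<noteq> 1 \<Longrightarrow> qq N d A x = (x^2-1)*(KH_F N d x + A)"
  unfolding qq_def KH_F_def by (simp add: field_simps)

lemma qd_id: "N \<noteq> 0 \<Longrightarrow> qd N d A x * (x^2-1) = -2*N*(1-N*x)*gg N d x + 2*x*qq N d A x"
  unfolding qd_def qq_def gg_def by (simp add: field_simps power2_eq_square)

lemma qq_neg_mid:
  assumes "N > 1" "d > 0" "A > 0" "x^2 \<le> 1"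
  shows "qq N d A x < 0"
proof (cases "x = 1/N")
  case True
  have "x^2 < 1" using True assms by (simp add: power_divide power_less_one_iff divide_less_eq_1) 
  then show ?thesis unfolding qq_def True using assms by (simp add: mult_pos_neg)
next
  case False
  hence "(1-N*x)^2 > 0" using assms by (auto simp: field_simps)
  moreover have "x^2-1-d^2 < 0" using assms by (smt (verit) zero_less_power2)
  ultimately have "(1-N*x)^2*(x^2-1-d^2) < 0" by (simp add: mult_pos_neg)
  moreover have "A*(x^2-1) \<le> 0" using assms by (simp add: mult_nonneg_nonpos)
  ultimately show ?thesis unfolding qq_def by linarith
qed

lemma order_simple:
  fixes p :: "'a::field_char_0 poly"
  assumes "p \<noteq> 0" "poly p x = 0" "poly (pderiv p) x \<noteq> 0"
  shows "order x p = 1"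
  using order_pderiv[OF assms(1,2)] assms(3) order_root by fastforce

lemma order_double:
  fixes p :: "'a::field_char_0 poly"
  assumes "pderiv p \<noteq> 0" "poly p x = 0" "poly (pderiv p) x = 0"
  shows "order x p \<ge> 2"
proof -
  have "p \<noteq> 0" using assms(1) by auto
  have "order x (pderiv p) \<noteq> 0" using assms(1,3) order_root by blast
  thus ?thesis using order_pderiv[OF \<open>p \<noteq> 0\<close> assms(2)] by simp
qed

lemma map_of_real_poly: "poly (map_poly complex_of_real p) (of_real x) = of_real (poly p x)"
  by (induction p) (auto simp: map_poly_pCons)

lemma map_pderiv: "pderiv (map_poly complex_of_real p) = map_poly complex_of_real (pderiv p)"
  by (intro poly_eqI) (simp add: coeff_map_poly coeff_pderiv)

lemma map_dQ: "poly (pderiv (map_poly complex_of_real (KH_quartic N d A))) (of_real x) = of_real (qd N d A x)"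
  unfolding map_pderiv map_of_real_poly poly_dQ ..



lemma rrc_size: "p \<noteq> 0 \<Longrightarrow> (\<Sum>x\<in>{x. poly p x = 0}. order x p) = size (proots p)"
  by (simp add: size_multiset_overloaded_eq)

lemma rrc_le: "(p::real poly) \<noteq> 0 \<Longrightarrow> real_root_count p \<le> degree p"
  unfolding real_root_count_def using rrc_size size_proots_le by metis

lemma rrc_ge:
  assumes "(p::real poly) \<noteq> 0" "S \<subseteq> {x. poly p x = 0}"
  shows "(\<Sum>x\<in>S. order x p) \<le> real_root_count p"
  unfolding real_root_count_def
  by (rule sum_mono2) (use assms poly_roots_finite in auto)

lemma complex_total:
  assumes "(p::real poly) \<noteq> 0"
  shows "(\<Sum>z\<in>{z. poly (map_poly complex_of_real p) z = 0}. order z (map_poly complex_of_real p)) = degree p"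
proof -
  have ne: "map_poly complex_of_real p \<noteq> 0" using assms by (simp add: map_poly_eq_0_iff)
  have "degree (map_poly complex_of_real p) = degree p" by (rule degree_map_poly) simp
  thus ?thesis using rrc_size[OF ne] size_proots_complex by simp
qed

lemma phi_gg: "z^2 \<noteq> 1 \<Longrightarrow> d \<noteq> 0 \<Longrightarrow> KH_phi N d z = gg N d z / (d^2*(z^2-1)^2)"
  unfolding KH_phi_def gg_def by (simp add: field_simps)

lemma qq_cont: "continuous_on S (qq N d A)"
  unfolding qq_def by (intro continuous_intros)



theorem proposition3:
  fixes N d :: real
  assumes "N > 1" and "d > 0"
    and "d^2 > 16 * N^2 / 27 * ((8 * N^2 - 6) * sqrt (1 - 3 / (4 * N^2)) + 8 * N^2 - 9)"
  shows "\<exists>z02 z03. z02 < z03 \<and>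
           {z. 1 < z \<and> z < sqrt (1 + d^2) \<and> KH_phi N d z = 0} = {z02, z03} \<and>
           (\<forall>A::real. A > 0 \<longrightarrow>
              ((- KH_F N d z02 < A \<and> A \<le> - KH_F N d z03) \<longrightarrow>
                  real_root_count (KH_quartic N d A) = 4) \<and>
              ((A < - KH_F N d z02 \<or> A > - KH_F N d z03) \<longrightarrow>
                  real_root_count (KH_quartic N d A) = 2 \<and>
                  nonreal_root_count (KH_quartic N d A) = 2))"
proof -
  note N1 = assms(1) and d0 = assms(2)
  have N0: "N > 0" "N \<noteq> 0" using N1 by auto
  define s where "s = sqrt (1+d^2)"
  have s2: "s^2 = 1 + d^2" unfolding s_def by (simp add: add_nonneg_nonneg)
  have s1: "s > 1"
  proof -
    have "sqrt 1 < sqrt (1+d^2)" using d0 by (subst real_sqrt_less_iff) simp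
    thus ?thesis unfolding s_def by simp
  qed
  define zs where "zs = (2*N + sqrt (4*N^2-3))/3"
  have zsN: "zs > N" unfolding zs_def by (rule zstar(1)[OF assms])
  have gzs: "gg N d zs < 0" unfolding zs_def by (rule zstar(2)[OF assms])
  have zs1: "zs > 1" using zsN N1 by simp
  obtain z02 z03 where H1': "1 < z02" "z02 < zs" "zs < z03" "z03 < sqrt (1+d^2)"
    and H2: "gg N d z02 = 0" "gg N d z03 = 0"
    and Hu: "\<And>x. 1 < x \<Longrightarrow> gg N d x = 0 \<Longrightarrow> x = z02 \<or> x = z03"
    and Hs1: "\<And>x. 1 < x \<Longrightarrow> x < z02 \<Longrightarrow> gg N d x > 0"
    and Hs2: "\<And>x. z02 < x \<Longrightarrow> x < z03 \<Longrightarrow> gg N d x < 0"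
    and Hs3: "\<And>x. z03 < x \<Longrightarrow> gg N d x > 0"
    using gg_props[OF N1 d0 zs1 gzs] by blast
  have H1: "1 < z02" "z02 < zs" "zs < z03" "z03 < s" using H1' unfolding s_def by auto
  have sqp: "t^2 > 1" if "t > 1 \<or> t < -1" for t :: real
  proof -
    have "\<bar>t\<bar> > 1" using that by auto
    hence "\<bar>t\<bar>^2 > 1" by (rule one_less_power) simp
    thus ?thesis by simp
  qed
  have sq1: "t^2 \<noteq> 1" if "t > 1 \<or> t < -1" for t :: real using sqp[OF that] by simp
  have Nt1: "1 - N*t < 0" if "t > 1" for t
  proof -
    have "N*t > 1" using that N1 less_1_mult by fastforce
    thus ?thesis by simp
  qed
  have Nt2: "1 - N*t > 0" if "t < -1" for t
  proof -
    have "N*t < 0" using that N0 by (simp add: mult_pos_neg)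
    thus ?thesis by simp
  qed
  have gneg: "gg N d t > 0" if "t < -1" for t
  proof -
    have "(t^2-1)^2 > 0" using sq1[of t] that by simp
    moreover have "1 - t/N > 0" using that N0 by (simp add: field_simps) 
    hence "d^2*(1-t/N) > 0" using d0 by simp
    ultimately show ?thesis unfolding gg_def by linarith
  qed
  define F where "F = KH_F N d"
  have M1: "F x < F y" if "1 < x" "x < y" "y \<le> z02" for x y
    unfolding F_def
  proof (rule F_incr[OF N0(1) that(2)])
    show "\<forall>t\<in>{x..y}. t^2 \<noteq> 1" using that sq1 by auto
    fix t assume "x < t" "t < y"
    thus "(1 - N*t) * gg N d t < 0" using Nt1[of t] Hs1[of t] that by (simp add: mult_neg_pos)
  qed
  have M2: "F x > F y" if "z02 \<le> x" "x < y" "y \<le> z03" for x y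
    unfolding F_def
  proof (rule F_decr[OF N0(1) that(2)])
    show "\<forall>t\<in>{x..y}. t^2 \<noteq> 1" using that sq1 H1 by auto
    fix t assume "x < t" "t < y"
    thus "(1 - N*t) * gg N d t > 0" using Nt1[of t] Hs2[of t] that H1 by (simp add: mult_neg_neg)
  qed
  have M3: "F x < F y" if "z03 \<le> x" "x < y" for x y
    unfolding F_def
  proof (rule F_incr[OF N0(1) that(2)])
    show "\<forall>t\<in>{x..y}. t^2 \<noteq> 1" using that sq1 H1 by auto
    fix t assume "x < t" "t < y"
    thus "(1 - N*t) * gg N d t < 0" using Nt1[of t] Hs3[of t] that H1 by (simp add: mult_neg_pos)
  qed
  have M4: "F x > F y" if "x < y" "y < -1" for x y
    unfolding F_def
  proof (rule F_decr[OF N0(1) that(1)])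
    show "\<forall>t\<in>{x..y}. t^2 \<noteq> 1" using that sq1 by auto
    fix t assume "x < t" "t < y"
    thus "(1 - N*t) * gg N d t > 0" using Nt2[of t] gneg[of t] that by simp
  qed
  have phiset: "{z. 1 < z \<and> z < s \<and> KH_phi N d z = 0} = {z02, z03}"
  proof -
    have "KH_phi N d z = 0 \<longleftrightarrow> gg N d z = 0" if "z > 1" for z
    proof -
      have "(d^2*(z^2-1)^2) \<noteq> 0" using sq1[of z] that d0 by simp
      thus ?thesis using phi_gg[of z d N] sq1[of z] that d0 by simp
    qed
    thus ?thesis using Hu H1 H2 by auto
  qed
  have ab: "F z03 < F z02" using M2[of z02 z03] H1 by simp
  show ?thesis
  proof (intro exI conjI allI impI)
    show "z02 < z03" using H1 by simp
    show "{z. 1 < z \<and> z < sqrt (1 + d^2) \<and> KH_phi N d z = 0} = {z02, z03}"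
      using phiset unfolding s_def .
  next
    fix A :: real assume A0: "A > 0"
    define Q where "Q = KH_quartic N d A"
    have Qne: "Q \<noteq> 0" unfolding Q_def using Q_ne N0 by simp
    have pQ: "poly Q x = qq N d A x" for x unfolding Q_def poly_Q ..
    have qF: "qq N d A x = (x^2-1)*(F x + A)" if "x > 1 \<or> x < -1" for x
      unfolding F_def using qq_F sq1[OF that] by blast
    have qpos: "qq N d A x > 0 \<longleftrightarrow> F x + A > 0" if "x > 1 \<or> x < -1" for x
      using qF[OF that] sqp[OF that] by (simp add: zero_less_mult_iff)
    have qneg: "qq N d A x < 0 \<longleftrightarrow> F x + A < 0" if "x > 1 \<or> x < -1" for x
      using qF[OF that] sqp[OF that] by (simp add: mult_less_0_iff)
    have qzero: "qq N d A x = 0 \<longleftrightarrow> F x + A = 0" if "x > 1 \<or> x < -1" for x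
      using qF[OF that] sqp[OF that] by simp
    have qs: "qq N d A s > 0" "qq N d A (-s) > 0"
      unfolding qq_def using s2 A0 d0 by simp_all
    have q1: "qq N d A 1 < 0" "qq N d A (-1) < 0" using qq_neg_mid[OF N1 d0 A0] by simp_all
    have qmid: "qq N d A x \<noteq> 0" if "\<not> (x > 1 \<or> x < -1)" for x
    proof -
      have "\<bar>x\<bar> \<le> 1" using that by auto
      hence "\<bar>x\<bar>^2 \<le> 1" by (intro power_le_one) auto
      hence "x^2 \<le> 1" by simp
      thus ?thesis using qq_neg_mid[OF N1 d0 A0] by (metis less_irrefl)
    qed
    have cont: "continuous_on S (qq N d A)" for S by (rule qq_cont)
    obtain r0 where r0: "-s < r0" "r0 < -1" "qq N d A r0 = 0"
      using ivt0[OF cont, of "-s" "-1"] s1 qs q1 by (auto simp: mult_pos_neg)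
    have r0u: "x = r0" if "x < -1" "qq N d A x = 0" for x
    proof (rule ccontr)
      assume "x \<noteq> r0"
      hence "x < r0 \<or> r0 < x" by auto
      hence "F x \<noteq> F r0" using M4[of x r0] M4[of r0 x] that r0 by auto
      moreover have "F x + A = 0" "F r0 + A = 0" using qzero that r0 by auto
      ultimately show False by simp
    qed
    have qdnz: "qd N d A x \<noteq> 0" if "x > 1 \<or> x < -1" "qq N d A x = 0" "gg N d x \<noteq> 0" for x
    proof
      assume "qd N d A x = 0"
      hence "-2*N*(1-N*x)*gg N d x = 0" using qd_id[OF N0(2), of d A x] that(2) by simp
      moreover have "1 - N*x \<noteq> 0" using Nt1[of x] Nt2[of x] that(1) by auto
      ultimately show False using that(3) N0 by simp
    qed
    have root_order_pos: "order x Q \<ge> 1" if "qq N d A x = 0" for x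
      using order_root[of Q x] Qne pQ that by simp
    show "real_root_count (KH_quartic N d A) = 4"
      if c4: "- KH_F N d z02 < A \<and> A \<le> - KH_F N d z03"
    proof -
      have a: "F z02 + A > 0" and b: "F z03 + A \<le> 0" using c4 unfolding F_def by auto
      obtain r1 where r1: "1 < r1" "r1 < z02" "qq N d A r1 = 0"
        using ivt0[OF cont H1(1)] q1 qpos[of z02] a H1 by (auto simp: mult_neg_pos)
      have "4 \<le> real_root_count Q"
      proof (cases "F z03 + A < 0")
        case True
        obtain r2 where r2: "z02 < r2" "r2 < z03" "qq N d A r2 = 0"
          using ivt0[OF cont, of z02 z03] qpos[of z02] qneg[of z03] a True H1 by (auto simp: mult_pos_neg)
        obtain r3 where r3: "z03 < r3" "r3 < s" "qq N d A r3 = 0"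
          using ivt0[OF cont, of z03 s] qs qneg[of z03] True H1 by (auto simp: mult_neg_pos)
        have "(\<Sum>x\<in>{r0,r1,r2,r3}. order x Q) \<le> real_root_count Q"
          by (intro rrc_ge[OF Qne]) (use pQ r0 r1 r2 r3 in auto)
        moreover have "(\<Sum>x\<in>{r0,r1,r2,r3}. order x Q) = order r0 Q + order r1 Q + order r2 Q + order r3 Q"
          using r0 r1 r2 r3 H1 by simp
        moreover have "order r0 Q \<ge> 1" "order r1 Q \<ge> 1" "order r2 Q \<ge> 1" "order r3 Q \<ge> 1"
          using root_order_pos r0 r1 r2 r3 by auto
        ultimately show ?thesis by linarith
      next
        case False
        hence z3: "qq N d A z03 = 0" using b qzero[of z03] H1 by auto
        have "qd N d A z03 = 0" using qd_id[OF N0(2), of d A z03] z3 H2 sq1[of z03] H1 by simp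
        hence "order z03 Q \<ge> 2"
          using order_double[of Q z03] dQ_ne[OF N0(2)] z3 pQ poly_dQ unfolding Q_def by simp
        moreover have "(\<Sum>x\<in>{r0,r1,z03}. order x Q) \<le> real_root_count Q"
          by (intro rrc_ge[OF Qne]) (use pQ r0 r1 z3 in auto)
        moreover have "(\<Sum>x\<in>{r0,r1,z03}. order x Q) = order r0 Q + order r1 Q + order z03 Q"
          using r0 r1 H1 by simp
        moreover have "order r0 Q \<ge> 1" "order r1 Q \<ge> 1"
          using root_order_pos r0 r1 by auto
        ultimately show ?thesis by linarith
      qed
      moreover have "real_root_count Q \<le> 4" using rrc_le[OF Qne] degree_Q[OF N0(2)] unfolding Q_def by simp
      ultimately show ?thesis unfolding Q_def by simp
    qed
    have two: "real_root_count (KH_quartic N d A) = 2 \<and> nonreal_root_count (KH_quartic N d A) = 2"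
      if c2: "A < - KH_F N d z02 \<or> A > - KH_F N d z03"
    proof -
    obtain r where r: "r > 1" "qq N d A r = 0" "gg N d r \<noteq> 0"
      and ru: "\<And>x. x > 1 \<Longrightarrow> qq N d A x = 0 \<Longrightarrow> x = r"
    proof (cases "A < - F z02")
      case True
      have le: "F x + A < 0" if "1 < x" "x \<le> z03" for x
      proof -
        have "F x \<le> F z02"
        proof (cases "x < z02")
          case True thus ?thesis using M1[of x z02] that by simp
        next
          case False thus ?thesis using M2[of z02 x] that by (cases "x = z02") auto
        qed
        thus ?thesis using True by simp
      qed
      obtain r where r: "z03 < r" "r < s" "qq N d A r = 0"
        using ivt0[OF cont, of z03 s] qs qneg[of z03] le[of z03] H1 by (auto simp: mult_neg_pos)
      show ?thesis
      proof (rule that[of r])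
        show "r > 1" "qq N d A r = 0" using r H1 by auto
        show "gg N d r \<noteq> 0" using Hs3[of r] r by simp
        fix x assume x: "x > 1" "qq N d A x = 0"
        have "x > z03" using le[of x] qzero[of x] x by force
        show "x = r"
        proof (rule ccontr)
          assume "x \<noteq> r"
          hence "F x \<noteq> F r" using M3[of x r] M3[of r x] \<open>x > z03\<close> r by (cases "x < r") auto
          moreover have "F x + A = 0" "F r + A = 0" using qzero x r H1 by auto
          ultimately show False by simp
        qed
      qed
    next
      case False
      hence Ab: "F z03 + A > 0" using c2 ab unfolding F_def by auto
      have ge: "F x + A > 0" if "z02 \<le> x" for x
      proof -
        have "F x \<ge> F z03"
        proof (cases "x \<le> z03")
          case True thus ?thesis using M2[of x z03] that by (cases "x = z03") auto
        next
          case False thus ?thesis using M3[of z03 x] by simp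
        qed
        thus ?thesis using Ab by simp
      qed
      obtain r where r: "1 < r" "r < z02" "qq N d A r = 0"
        using ivt0[OF cont H1(1)] q1 qpos[of z02] ge[of z02] H1 by (auto simp: mult_neg_pos)
      show ?thesis
      proof (rule that[of r])
        show "r > 1" "qq N d A r = 0" using r by auto
        show "gg N d r \<noteq> 0" using Hs1[of r] r by simp
        fix x assume x: "x > 1" "qq N d A x = 0"
        have "x < z02" using ge[of x] qzero[of x] x by force
        show "x = r"
        proof (rule ccontr)
          assume "x \<noteq> r"
          hence "F x \<noteq> F r" using M1[of x r] M1[of r x] \<open>x < z02\<close> r x by (cases "x < r") auto
          moreover have "F x + A = 0" "F r + A = 0" using qzero x r by auto
          ultimately show False by simp
        qed
      qed
    qed
    have roots: "{x. poly Q x = 0} = {r0, r}"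
    proof (intro set_eqI iffI)
      fix x assume "x \<in> {x. poly Q x = 0}"
      hence x: "qq N d A x = 0" using pQ by simp
      show "x \<in> {r0, r}"
      proof (cases "x > 1")
        case True thus ?thesis using ru x by auto
      next
        case False
        hence "x < -1" using qmid x by force
        thus ?thesis using r0u x by auto
      qed
    qed (use pQ r0 r in auto)
    have rr0: "r0 \<noteq> r" using r0 r by simp
    have o0: "poly (pderiv Q) r0 \<noteq> 0" using qdnz[of r0] r0 gneg[of r0] poly_dQ unfolding Q_def by simp
    have o1: "poly (pderiv Q) r \<noteq> 0" using qdnz[of r] r poly_dQ unfolding Q_def by simp
    have ord0: "order r0 Q = 1" using order_simple[OF Qne] o0 pQ r0 by simp
    have ord1: "order r Q = 1" using order_simple[OF Qne] o1 pQ r by simp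
    have rc: "real_root_count Q = 2"
      unfolding real_root_count_def roots using rr0 ord0 ord1 by simp
    define P where "P = map_poly complex_of_real Q"
    have Pne: "P \<noteq> 0" unfolding P_def using Qne by (simp add: map_poly_eq_0_iff)
    have tot: "(\<Sum>z\<in>{z. poly P z = 0}. order z P) = 4"
      using complex_total[OF Qne] degree_Q[OF N0(2)] unfolding P_def Q_def by simp
    have split: "{z. poly P z = 0} = {of_real r0, of_real r} \<union> {z. poly P z = 0 \<and> Im z \<noteq> 0}"
    proof (intro set_eqI iffI)
      fix z assume z: "z \<in> {z. poly P z = 0}"
      show "z \<in> {of_real r0, of_real r} \<union> {z. poly P z = 0 \<and> Im z \<noteq> 0}"
      proof (cases "Im z = 0")
        case True
        hence zr: "z = of_real (Re z)" by (simp add: complex_eq_iff)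
        have "of_real (poly Q (Re z)) = (0::complex)"
          using z zr map_of_real_poly[of Q "Re z"] unfolding P_def by simp
        hence "Re z \<in> {x. poly Q x = 0}" by simp
        hence "Re z \<in> {r0, r}" unfolding roots .
        thus ?thesis using zr by auto
      qed (use z in auto)
    next
      fix z assume "z \<in> {of_real r0, of_real r} \<union> {z. poly P z = 0 \<and> Im z \<noteq> 0}"
      thus "z \<in> {z. poly P z = 0}"
        using map_of_real_poly[of Q r0] map_of_real_poly[of Q r] pQ r0 r unfolding P_def by auto
    qed
    have fin: "finite {z. poly P z = 0}" using poly_roots_finite Pne by blast
    have disj: "{of_real r0, of_real r} \<inter> {z. poly P z = 0 \<and> Im z \<noteq> (0::real)} = ({} :: complex set)" by auto
    have "(\<Sum>z\<in>{z. poly P z = 0}. order z P) =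
          (\<Sum>z\<in>{of_real r0, of_real r}. order z P) + (\<Sum>z\<in>{z. poly P z = 0 \<and> Im z \<noteq> 0}. order z P)"
      unfolding split by (rule sum.union_disjoint) (use fin split disj in auto)
    moreover have "order (of_real r0) P = 1" "order (of_real r) P = 1"
    proof -
      show "order (of_real r0) P = 1"
        using order_simple[OF Pne] map_of_real_poly[of Q r0] map_dQ[of N d A r0] pQ r0 o0 poly_dQ
        unfolding P_def Q_def by simp
      show "order (of_real r) P = 1"
        using order_simple[OF Pne] map_of_real_poly[of Q r] map_dQ[of N d A r] pQ r o1 poly_dQ
        unfolding P_def Q_def by simp
    qed
    ultimately have "(\<Sum>z\<in>{z. poly P z = 0 \<and> Im z \<noteq> 0}. order z P) = 2"
      using tot rr0 by simp
    thus "real_root_count (KH_quartic N d A) = 2 \<and> nonreal_root_count (KH_quartic N d A) = 2"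
      using rc unfolding nonreal_root_count_def P_def Q_def by simp
    qed
    show "real_root_count (KH_quartic N d A) = 2" if "A < - KH_F N d z02 \<or> A > - KH_F N d z03"
      using two[OF that] by simp
    show "nonreal_root_count (KH_quartic N d A) = 2" if "A < - KH_F N d z02 \<or> A > - KH_F N d z03"
      using two[OF that] by simp
  qed
qed


end
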